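(* Let $n\in\mathbb{N}$ and $\alpha_1,\dots,\alpha_n>0$ pairwise distinct. Then $$\sigma_{ap}(W_{\chi_{\alpha_1}},\dots,W_{\chi_{\alpha_n}})=\overline{\{(\chi_{\alpha_1}(y),\dots,\chi_{\alpha_n}(y)):y\in\mathbb{R}\}}.$$
   Context: $\chi_\alpha(y)=e^{i\alpha y}$. $H^2(\mathbb{R})$ is the subspace of $L^2(\mathbb{R})$ (Lebesgue measure) of functions whose Fourier transform is supported in $[0,\infty)$, $P_m$ the projection onto it, and $W_f h=P_m(fh)$ for $f\in L^\infty(\mathbb{R})$; for $\alpha>0$, $W_{\chi_\alpha}$ is multiplication by $\chi_\alpha$ restricted to $H^2(\mathbb{R})$. The joint approximate point spectrum of commuting $A_1,\dots,A_n$ is the set of $\lambda\in\mathbb{C}^n$ with unit vectors $x_m$ such that $\|(A_j-\lambda_jI)x_m\|\to0$ for all $j$. *)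

theory Defs
  imports "HOL-Analysis.Analysis"
begin

definition chi :: "real \<Rightarrow> real \<Rightarrow> complex" where
  "chi \<alpha> y = exp (\<i> * complex_of_real (\<alpha> * y))"

definition L2 :: "(real \<Rightarrow> complex) set" where
  "L2 = {f. f \<in> borel_measurable lborel \<and> integrable lborel (\<lambda>x. (cmod (f x))^2)}"

definition L2norm :: "(real \<Rightarrow> complex) \<Rightarrow> real" where
  "L2norm f = sqrt (\<integral>x. (cmod (f x))^2 \<partial>lborel)"

definition fourier :: "(real \<Rightarrow> complex) \<Rightarrow> real \<Rightarrow> complex" where
  "fourier \<psi> \<xi> = (\<integral>x. \<psi> x * exp (- \<i> * complex_of_real (x * \<xi>)) \<partial>lborel)"

definition smooth_fun :: "(real \<Rightarrow> complex) \<Rightarrow> bool" where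
  "smooth_fun \<psi> \<longleftrightarrow> (\<exists>D :: nat \<Rightarrow> real \<Rightarrow> complex. D 0 = \<psi> \<and>
      (\<forall>k x. (D k has_vector_derivative D (Suc k) x) (at x)))"

definition test_neg :: "(real \<Rightarrow> complex) \<Rightarrow> bool" where
  "test_neg \<psi> \<longleftrightarrow> smooth_fun \<psi> \<and>
     (\<exists>a b. b < 0 \<and> (\<forall>x. x \<notin> {a..b} \<longrightarrow> \<psi> x = 0))"

text \<open>Hardy space H^2(R): L2 functions whose (distributional) Fourier transform
  is supported in [0,infinity), i.e. <hat f, psi> = <f, hat psi> = 0 for all
  test functions psi supported in (-infinity,0).\<close>
definition H2 :: "(real \<Rightarrow> complex) set" where
  "H2 = {f \<in> L2. \<forall>\<psi>. test_neg \<psi> \<longrightarrow> (\<integral>x. f x * fourier \<psi> x \<partial>lborel) = 0}"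

definition W_chi :: "real \<Rightarrow> (real \<Rightarrow> complex) \<Rightarrow> (real \<Rightarrow> complex)" where
  "W_chi \<alpha> h = (\<lambda>y. chi \<alpha> y * h y)"

definition joint_ap_spectrum ::
  "(real \<Rightarrow> complex) set \<Rightarrow> ('n \<Rightarrow> (real \<Rightarrow> complex) \<Rightarrow> (real \<Rightarrow> complex))
     \<Rightarrow> (complex ^ 'n) set" where
  "joint_ap_spectrum H A = {l. \<exists>x :: nat \<Rightarrow> real \<Rightarrow> complex.
      (\<forall>m. x m \<in> H \<and> L2norm (x m) = 1) \<and>
      (\<forall>j. (\<lambda>m. L2norm (\<lambda>y. A j (x m) y - l $ j * x m y)) \<longlonglongrightarrow> 0)}"

end

theory Submission
  imports Defs "HOL-Probability.Characteristic_Functions" "HOL-Probability.Sinc_Integral" "HOL-Real_Asymp.Real_Asymp"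
begin


lemma gauss_ft:
  assumes e: "e > 0"
  shows "(\<integral>x. exp (-(e*x^2)/2) *\<^sub>R iexp (x*u) \<partial>lborel) = complex_of_real (sqrt (2*pi/e) * exp (-(u^2)/(2*e)))"
proof -
  define t where "t = u / sqrt e"
  have se: "sqrt e > 0" using e by simp
  have "char std_normal_distribution t = complex_of_real (exp (- (t^2) / 2))"
    by (simp add: char_std_normal_distribution)
  moreover have "char std_normal_distribution t = (\<integral>z. std_normal_density z *\<^sub>R iexp (t * z) \<partial>lborel)"
    unfolding char_def by (subst integral_density) (auto simp: normal_density_nonneg)
  ultimately have 1: "(\<integral>z. std_normal_density z *\<^sub>R iexp (t * z) \<partial>lborel) = complex_of_real (exp (- (t^2) / 2))" by simp
  have "(\<integral>x. exp (-(e*x^2)/2) *\<^sub>R iexp (x*u) \<partial>lborel) = \<bar>1/sqrt e\<bar> *\<^sub>R (\<integral>z. exp (-(e*(0 + 1/sqrt e * z)^2)/2) *\<^sub>R iexp ((0 + 1/sqrt e * z)*u) \<partial>lborel)"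
    by (rule lborel_integral_real_affine) (use se in auto)
  also have "(\<lambda>z. exp (-(e*(0 + 1/sqrt e * z)^2)/2) *\<^sub>R iexp ((0 + 1/sqrt e * z)*u)) = (\<lambda>z. sqrt (2*pi) *\<^sub>R (std_normal_density z *\<^sub>R iexp (t * z)))"
    using se e by (auto simp: std_normal_density_def t_def power_divide field_simps real_sqrt_power[symmetric])
  also have "\<bar>1/sqrt e\<bar> *\<^sub>R (\<integral>z. sqrt (2*pi) *\<^sub>R (std_normal_density z *\<^sub>R iexp (t * z)) \<partial>lborel) = (1/sqrt e * sqrt (2*pi)) *\<^sub>R complex_of_real (exp (- (t^2) / 2))"
    unfolding integral_scaleR_right 1 using se by simp
  also have "\<dots> = complex_of_real (sqrt (2*pi/e) * exp (-(u^2)/(2*e)))"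
    using se e by (simp add: t_def power_divide real_sqrt_divide scaleR_conv_of_real field_simps)
  finally show ?thesis .
qed


lemma exp_int: "integrable lborel (\<lambda>x. exp (-x) * indicator {0<..} x :: real)"
  "(\<integral>x. exp (-x) * indicator {0<..} x \<partial>lborel) = (1::real)"
  using has_bochner_integral_I0i_power_exp_m[of 0] unfolding has_bochner_integral_iff by auto

lemma rep:
  "(\<integral>t. indicator {0<..} t *\<^sub>R exp ((\<i> * complex_of_real u - 1) * complex_of_real t) \<partial>lborel)
     = 1 / (1 - \<i> * complex_of_real u)"
proof -
  define w where "w = \<i> * complex_of_real u - 1"
  have w0: "w \<noteq> 0" unfolding w_def by (auto simp: complex_eq_iff)
  have nw: "norm (exp (w * complex_of_real t)) = exp (-t)" for t
  proof -
    have "Re (w * complex_of_real t) = -t" by (simp add: w_def)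
    then show ?thesis by (simp only: norm_exp_eq_Re)
  qed
  have si: "set_integrable lborel (einterval 0 \<infinity>) (\<lambda>t. exp (w * complex_of_real t))"
    unfolding set_integrable_def
  proof (rule Bochner_Integration.integrable_bound[OF exp_int(1)])
    show "(\<lambda>x. indicat_real (einterval 0 \<infinity>) x *\<^sub>R exp (w * complex_of_real x)) \<in> borel_measurable lborel"
      by measurable
    show "AE x in lborel. norm (indicat_real (einterval 0 \<infinity>) x *\<^sub>R exp (w * complex_of_real x)) \<le> norm (exp (-x) * indicator {0<..} x :: real)"
      by (auto simp: w_def zero_ereal_def split: split_indicator)
  qed
  have "(LBINT t=0..\<infinity>. exp (w * complex_of_real t)) = 0 - exp (w * 0) / w"
  proof (rule interval_integral_FTC_integrable[where F="\<lambda>t. exp (w * complex_of_real t) / w"])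
    show "(0::ereal) < \<infinity>" by simp
    show "((\<lambda>t. exp (w * complex_of_real t) / w) has_vector_derivative exp (w * complex_of_real x)) (at x)" for x
    proof -
      have "((\<lambda>z. exp (w * z) / w) has_field_derivative exp (w * complex_of_real x)) (at (complex_of_real x))"
        using w0 by (auto intro!: derivative_eq_intros)
      then show ?thesis by (rule has_vector_derivative_real_field)
    qed
    show "isCont (\<lambda>t. exp (w * complex_of_real t)) x" for x by (intro continuous_intros)
    show "set_integrable lborel (einterval 0 \<infinity>) (\<lambda>t. exp (w * complex_of_real t))" by (rule si)
    show "(((\<lambda>t. exp (w * complex_of_real t) / w) \<circ> real_of_ereal) \<longlongrightarrow> exp (w * 0) / w) (at_right 0)"
      unfolding zero_ereal_def ereal_tendsto_simps
      using w0 by (auto intro!: tendsto_eq_intros)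
    have "((\<lambda>t. exp (w * complex_of_real t) / w) \<longlongrightarrow> 0) at_top"
    proof (rule tendsto_norm_zero_cancel)
      have "((\<lambda>t. exp (-t) / norm w) \<longlongrightarrow> 0) at_top"
        by (intro tendsto_divide_zero filterlim_compose[OF exp_at_bot filterlim_uminus_at_bot_at_top])
      then show "((\<lambda>t. norm (exp (w * complex_of_real t) / w)) \<longlongrightarrow> 0) at_top"
        by (simp add: w_def norm_divide)
    qed
    then show "(((\<lambda>t. exp (w * complex_of_real t) / w) \<circ> real_of_ereal) \<longlongrightarrow> 0) (at_left \<infinity>)"
      unfolding ereal_tendsto_simps by simp
  qed
  then have "(LBINT t=0..\<infinity>. exp (w * complex_of_real t)) = 1 / (1 - \<i> * complex_of_real u)"
    using w0 by (simp add: w_def field_simps)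
  then show ?thesis
    by (simp add: interval_lebesgue_integral_0_infty set_lebesgue_integral_def w_def)
qed


lemma prod_integrable:
  fixes H :: "real \<times> real \<Rightarrow> complex"
  assumes H: "H \<in> borel_measurable (lborel \<Otimes>\<^sub>M lborel)"
    and p: "integrable lborel p" and q: "integrable lborel q"
    and bd: "\<And>x y. norm (H (x,y)) \<le> p x * q y"
  shows "integrable (lborel \<Otimes>\<^sub>M lborel) H"
proof (rule Bochner_Integration.integrable_bound[OF _ H])
  have pm[measurable]: "p \<in> borel_measurable lborel" using p by auto
  have qm[measurable]: "q \<in> borel_measurable lborel" using q by auto
  show "integrable (lborel \<Otimes>\<^sub>M lborel) (\<lambda>z. p (fst z) * q (snd z))"
  proof (rule lborel_pair.Fubini_integrable)
    show "(\<lambda>z. p (fst z) * q (snd z)) \<in> borel_measurable (lborel \<Otimes>\<^sub>M lborel)" by measurable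
    have "integrable lborel (\<lambda>x. norm (p x) * (\<integral>y. norm (q y) \<partial>lborel))"
      using p by (intro integrable_mult_left) auto
    then show "integrable lborel (\<lambda>x. \<integral>y. norm (p (fst (x, y)) * q (snd (x, y))) \<partial>lborel)"
      by (simp add: abs_mult)
    show "AE x in lborel. integrable lborel (\<lambda>y. p (fst (x, y)) * q (snd (x, y)))"
      using q by auto
  qed
  show "AE z in lborel \<Otimes>\<^sub>M lborel. norm (H z) \<le> norm (p (fst z) * q (snd z))"
    using bd by (auto intro!: AE_I2 order_trans[OF _ abs_ge_self] simp: split_paired_all)
qed

definition w :: "real \<Rightarrow> real \<Rightarrow> real" where "w e x = exp (-(e*x^2)/2)"

lemma w_integrable: assumes "e > 0" shows "integrable lborel (w e)"
proof -
  have "w e = (\<lambda>x. sqrt (2*pi/e) * normal_density 0 (1/sqrt e) x)"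
    using assms by (auto simp: w_def normal_density_def power_divide real_sqrt_divide field_simps real_sqrt_mult)
  moreover have "integrable lborel (normal_density 0 (1/sqrt e))"
    using assms by (intro integrable_normal_density) simp
  ultimately show ?thesis by auto
qed

lemma w_pos: "w e x > 0" by (simp add: w_def)
lemma w_le1: "e \<ge> 0 \<Longrightarrow> w e x \<le> 1" by (simp add: w_def)


definition f0 :: "real \<Rightarrow> complex" where "f0 u = 1 / (1 - \<i> * complex_of_real u)"

lemma G_bound:
  assumes m: "m > 0" and e: "e > 0" and sb: "s \<le> b" and b: "b < 0"
  shows "norm (\<integral>x. f0 (m*(x-y0)) * exp (-(\<i> * complex_of_real (x * s))) * complex_of_real (w e x) \<partial>lborel)
           \<le> sqrt (2*pi/e) * exp (-(b^2)/(2*e))"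
proof -
  define J where "J x t = indicator {0<..} t *\<^sub>R (exp ((\<i> * complex_of_real (m*(x-y0)) - 1) * complex_of_real t)
      * exp (-(\<i> * complex_of_real (x * s))) * complex_of_real (w e x))" for x t
  define C0 where "C0 = sqrt (2*pi/e) * exp (-(b^2)/(2*e))"
  define E where "E t = indicator {0<..} t *\<^sub>R (exp (-(1 + \<i> * complex_of_real (m*y0)) * complex_of_real t)
      * complex_of_real (sqrt (2*pi/e) * exp (-((m*t-s)^2)/(2*e))))" for t
  have 1: "f0 (m*(x-y0)) * exp (-(\<i> * complex_of_real (x * s))) * complex_of_real (w e x) = (\<integral>t. J x t \<partial>lborel)" for x
    unfolding J_def f0_def rep[symmetric] integral_mult_left_zero[symmetric]
    by (simp add: mult.assoc)
  have Jm: "(\<lambda>(x,t). J x t) \<in> borel_measurable (lborel \<Otimes>\<^sub>M lborel)"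
    unfolding J_def w_def by measurable
  have int: "integrable (lborel \<Otimes>\<^sub>M lborel) (\<lambda>(x,t). J x t)"
  proof (rule prod_integrable[OF Jm w_integrable[OF e] exp_int(1)])
    fix x t
    have "norm ((\<lambda>(x,t). J x t) (x,t)) = w e x * (exp (-t) * indicator {0<..} t)"
      using w_pos[of e x] unfolding J_def split norm_scaleR norm_mult norm_exp_eq_Re norm_of_real
      by (simp split: split_indicator)
    then show "norm ((\<lambda>(x,t). J x t) (x,t)) \<le> w e x * (exp (-t) * indicator {0<..} t)" by simp
  qed
  have 2: "(\<integral>x. J x t \<partial>lborel) = E t" for t
  proof -
    have "J x t = indicator {0<..} t *\<^sub>R (exp (-(1 + \<i> * complex_of_real (m*y0)) * complex_of_real t)
        * (exp (-(e*x^2)/2) *\<^sub>R iexp (x*(m*t-s))))" for x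
    proof -
      have "exp ((\<i> * complex_of_real (m*(x-y0)) - 1) * complex_of_real t) * exp (-(\<i> * complex_of_real (x * s)))
         = exp (-(1 + \<i> * complex_of_real (m*y0)) * complex_of_real t) * exp (\<i> * complex_of_real (x*(m*t-s)))"
        unfolding exp_add[symmetric] by (simp add: algebra_simps)
      then show ?thesis unfolding J_def w_def
        by (simp add: scaleR_conv_of_real mult.assoc mult.left_commute)
    qed
    then have "(\<lambda>x. J x t) = (\<lambda>x. indicator {0<..} t *\<^sub>R (exp (-(1 + \<i> * complex_of_real (m*y0)) * complex_of_real t)
        * (exp (-(e*x^2)/2) *\<^sub>R iexp (x*(m*t-s)))))" by (rule ext)
    then have "(\<integral>x. J x t \<partial>lborel) = indicator {0<..} t *\<^sub>R (exp (-(1 + \<i> * complex_of_real (m*y0)) * complex_of_real t)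
        * (\<integral>x. exp (-(e*x^2)/2) *\<^sub>R iexp (x*(m*t-s)) \<partial>lborel))"
      by (simp only: integral_scaleR_right integral_mult_right_zero)
    then show ?thesis unfolding E_def gauss_ft[OF e] .
  qed
  have 3: "(\<integral>x. f0 (m*(x-y0)) * exp (-(\<i> * complex_of_real (x * s))) * complex_of_real (w e x) \<partial>lborel) = (\<integral>t. E t \<partial>lborel)"
    unfolding 1 using lborel_pair.Fubini_integral[OF int] 2 by simp
  have Ebd: "norm (E t) \<le> exp (-t) * indicator {0<..} t * C0" for t
  proof (cases "t > 0")
    case True
    have "-b \<le> m*t - s" using True m sb by (simp add: algebra_simps) (smt (verit) mult_pos_pos)
    then have "b^2 \<le> (m*t - s)^2" using b by (smt (verit) power_mono power2_minus)
    then have "exp (-((m*t-s)^2)/(2*e)) \<le> exp (-(b^2)/(2*e))" using e by (simp add: divide_right_mono)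
    moreover have "norm (E t) = exp (-t) * (sqrt (2*pi/e) * exp (-((m*t-s)^2)/(2*e)))"
      using True e unfolding E_def norm_scaleR norm_mult norm_exp_eq_Re norm_of_real by (simp add: abs_mult)
    ultimately show ?thesis using True unfolding C0_def
      using e by simp
  next
    case False then show ?thesis by (simp add: E_def)
  qed
  have Eint: "integrable lborel E"
  proof (rule Bochner_Integration.integrable_bound[where f="\<lambda>x. C0 * (exp (-x) * indicator {0<..} x)"])
    show "integrable lborel (\<lambda>x. C0 * (exp (-x) * indicator {0<..} x))" using exp_int(1) by simp
    show "E \<in> borel_measurable lborel" unfolding E_def by measurable
    show "AE x in lborel. norm (E x) \<le> norm (C0 * (exp (- x) * indicator {0<..} x))"
      using Ebd by (auto intro!: AE_I2 order_trans[OF _ abs_ge_self] simp: mult_ac)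
  qed
  have "norm (\<integral>t. E t \<partial>lborel) \<le> (\<integral>t. exp (-t) * indicator {0<..} t * C0 \<partial>lborel)"
    by (rule Bochner_Integration.integral_norm_bound_integral[OF Eint]) (use Ebd exp_int in auto)
  also have "\<dots> = C0" using exp_int by simp
  finally show ?thesis unfolding 3 C0_def .
qed


lemma norm_f0_sq: "norm (f0 u) ^ 2 = 1 / (1 + u^2)"
proof -
  have "norm (1 - \<i> * complex_of_real u) ^ 2 = 1 + u^2"
    by (simp add: cmod_power2)
  then show ?thesis by (simp add: f0_def norm_divide power_divide)
qed

lemma norm_f0_le: "norm (f0 u) \<le> 1"
proof -
  have "1 + u^2 > 0" by (simp add: add_pos_nonneg)
  then have "norm (f0 u) ^ 2 \<le> 1 ^ 2" unfolding norm_f0_sq by (simp add: divide_le_eq_1)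
  then show ?thesis by (rule power2_le_imp_le) simp
qed

lemma cont_f0: "continuous_on UNIV f0"
proof -
  have "1 - \<i> * complex_of_real u \<noteq> 0" for u by (simp add: complex_eq_iff)
  then show ?thesis unfolding f0_def by (intro continuous_intros) auto
qed

lemma f0_meas[measurable]: "f0 \<in> borel_measurable borel"
  by (rule borel_measurable_continuous_onI[OF cont_f0])

lemma test_neg_props:
  assumes "test_neg \<psi>"
  obtains a b where "b < 0" "\<And>x. x \<notin> {a..b} \<Longrightarrow> \<psi> x = 0" "continuous_on UNIV \<psi>"
    "integrable lborel \<psi>"
proof -
  from assms obtain D a b where D: "D 0 = \<psi>" "\<And>k x. (D k has_vector_derivative D (Suc k) x) (at x)"
    and b: "b < 0" and z: "\<And>x. x \<notin> {a..b} \<Longrightarrow> \<psi> x = 0"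
    unfolding test_neg_def smooth_fun_def by blast
  have c: "continuous_on UNIV \<psi>"
    using D by (metis continuous_at_imp_continuous_on has_vector_derivative_continuous)
  have "set_integrable lborel {a..b} \<psi>"
    by (rule borel_integrable_atLeastAtMost') (rule continuous_on_subset[OF c], auto)
  moreover have "(\<lambda>x. indicator {a..b} x *\<^sub>R \<psi> x) = \<psi>"
    using z by (auto split: split_indicator)
  ultimately have "integrable lborel \<psi>" unfolding set_integrable_def by simp
  with b z c show ?thesis by (intro that) auto
qed

lemma C_lim: assumes "b < 0"
  shows "(\<lambda>n. sqrt (2*pi/(1/real (Suc n))) * exp (-(b^2)/(2*(1/real (Suc n))))) \<longlonglongrightarrow> 0"
proof -
  have c: "b^2/2 > 0" using assms by simp
  have "((\<lambda>x. sqrt (2*pi*x) * exp (-(b^2/2)*x)) \<longlongrightarrow> 0) at_top"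
    using c by real_asymp
  then have "(\<lambda>n. sqrt (2*pi*real (Suc n)) * exp (-(b^2/2)*real (Suc n))) \<longlonglongrightarrow> 0"
    by (rule filterlim_compose) (intro filterlim_compose[OF filterlim_real_sequentially] filterlim_Suc)
  moreover have "sqrt (2*pi/(1/real (Suc n))) * exp (-(b^2)/(2*(1/real (Suc n)))) = sqrt (2*pi*real (Suc n)) * exp (-(b^2/2)*real (Suc n))" for n
    by (simp add: field_simps)
  ultimately show ?thesis by simp
qed



lemma F_orth:
  assumes m: "m > 0" and psi: "test_neg \<psi>"
  shows "(\<integral>x. f0 (m*(x-y0)) * fourier \<psi> x \<partial>lborel) = 0"
proof -
  obtain a b where b: "b < 0" and z: "\<And>x. x \<notin> {a..b} \<Longrightarrow> \<psi> x = 0"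
    and c: "continuous_on UNIV \<psi>" and pint: "integrable lborel \<psi>"
    using test_neg_props[OF psi] by blast
  have pm[measurable]: "\<psi> \<in> borel_measurable borel" by (rule borel_measurable_continuous_onI[OF c])
  define F where "F x = f0 (m*(x-y0))" for x
  have Fm[measurable]: "F \<in> borel_measurable borel" unfolding F_def by measurable
  have Fb: "norm (F x) \<le> 1" for x unfolding F_def by (rule norm_f0_le)
  define P where "P = (\<integral>s. norm (\<psi> s) \<partial>lborel)"
  define C where "C e = sqrt (2*pi/e) * exp (-(b^2)/(2*e))" for e
  define T where "T e = (\<integral>x. F x * fourier \<psi> x * complex_of_real (w e x) \<partial>lborel)" for e
  have Tb: "norm (T e) \<le> P * C e" if e: "e > 0" for e
  proof -
    define G where "G s = (\<integral>x. F x * exp (-(\<i> * complex_of_real (x * s))) * complex_of_real (w e x) \<partial>lborel)" for s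
    define K where "K x s = F x * \<psi> s * exp (-(\<i> * complex_of_real (x * s))) * complex_of_real (w e x)" for x s
    have 1: "F x * fourier \<psi> x * complex_of_real (w e x) = (\<integral>s. K x s \<partial>lborel)" for x
    proof -
      have "F x * fourier \<psi> x * complex_of_real (w e x) = (\<integral>s. F x * (\<psi> s * exp (- \<i> * complex_of_real (s * x))) * complex_of_real (w e x) \<partial>lborel)"
        unfolding fourier_def by simp
      also have "\<dots> = (\<integral>s. K x s \<partial>lborel)"
        unfolding K_def by (rule Bochner_Integration.integral_cong) (simp_all add: mult.commute mult.left_commute)
      finally show ?thesis .
    qed
    have Km: "(\<lambda>(x,s). K x s) \<in> borel_measurable (lborel \<Otimes>\<^sub>M lborel)"
      unfolding K_def w_def by measurable
    have Kint: "integrable (lborel \<Otimes>\<^sub>M lborel) (\<lambda>(x,s). K x s)"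
    proof (rule prod_integrable[OF Km w_integrable[OF e]])
      show "integrable lborel (\<lambda>s. norm (\<psi> s))" using pint by simp
      fix x s
      have "norm (K x s) = norm (F x) * norm (\<psi> s) * w e x"
        unfolding K_def norm_mult norm_of_real using w_pos[of e x] by simp
      also have "\<dots> \<le> w e x * norm (\<psi> s)"
        using Fb[of x] w_pos[of e x] by (simp add: mult_right_le_one_le mult.commute mult_left_le_one_le)
      finally show "norm ((\<lambda>(x,s). K x s) (x,s)) \<le> w e x * norm (\<psi> s)" by simp
    qed
    have 2: "(\<integral>x. K x s \<partial>lborel) = \<psi> s * G s" for s
      unfolding G_def K_def integral_mult_right_zero[symmetric]
      by (rule Bochner_Integration.integral_cong) (simp_all add: mult_ac)
    have 3: "T e = (\<integral>s. \<psi> s * G s \<partial>lborel)"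
      unfolding T_def 1 using lborel_pair.Fubini_integral[OF Kint] 2 by simp
    have pb: "norm (\<psi> s * G s) \<le> norm (\<psi> s) * C e" for s
    proof (cases "s \<in> {a..b}")
      case True
      then have "norm (G s) \<le> C e" unfolding G_def C_def F_def
        using G_bound[OF m e _ b, of s y0] by auto
      then show ?thesis by (simp add: norm_mult mult_left_mono)
    next
      case False then show ?thesis using z by simp
    qed
    show ?thesis
    proof (cases "integrable lborel (\<lambda>s. \<psi> s * G s)")
      case True
      have "norm (T e) \<le> (\<integral>s. norm (\<psi> s) * C e \<partial>lborel)"
        unfolding 3 by (rule Bochner_Integration.integral_norm_bound_integral[OF True]) (use pint pb in auto)
      also have "\<dots> = P * C e" unfolding P_def by simp
      finally show ?thesis .
    next
      case False
      have "P \<ge> 0" unfolding P_def by simp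
      moreover have "C e \<ge> 0" unfolding C_def using e by simp
      ultimately show ?thesis using False unfolding 3 by (simp add: not_integrable_integral_eq)
    qed
  qed
  show ?thesis
  proof (cases "integrable lborel (\<lambda>x. F x * fourier \<psi> x)")
    case False then show ?thesis unfolding F_def by (simp add: not_integrable_integral_eq)
  next
    case True
    have Im[measurable]: "(\<lambda>x. F x * fourier \<psi> x) \<in> borel_measurable lborel" using True by auto
    have lim1: "(\<lambda>n. T (1/real (Suc n))) \<longlonglongrightarrow> (\<integral>x. F x * fourier \<psi> x \<partial>lborel)"
      unfolding T_def
    proof (rule integral_dominated_convergence[where w="\<lambda>x. norm (F x * fourier \<psi> x)"])
      show "(\<lambda>x. F x * fourier \<psi> x) \<in> borel_measurable lborel" by (rule Im)
      show "(\<lambda>x. F x * fourier \<psi> x * complex_of_real (w (1/real (Suc n)) x)) \<in> borel_measurable lborel" for n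
        unfolding w_def by measurable
      show "integrable lborel (\<lambda>x. norm (F x * fourier \<psi> x))" using True by simp
      show "AE x in lborel. (\<lambda>n. F x * fourier \<psi> x * complex_of_real (w (1/real (Suc n)) x)) \<longlonglongrightarrow> F x * fourier \<psi> x"
      proof (rule AE_I2)
        fix x
        have "(\<lambda>n. w (1/real (Suc n)) x) \<longlonglongrightarrow> exp (-(0*x^2)/2)"
          unfolding w_def by (intro tendsto_intros LIMSEQ_inverse_real_of_nat[unfolded inverse_eq_divide]) simp_all
        then have "(\<lambda>n. complex_of_real (w (1/real (Suc n)) x)) \<longlonglongrightarrow> 1" using tendsto_of_real[where 'a=complex] by fastforce
        then show "(\<lambda>n. F x * fourier \<psi> x * complex_of_real (w (1/real (Suc n)) x)) \<longlonglongrightarrow> F x * fourier \<psi> x"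
          using tendsto_mult[OF tendsto_const] by fastforce
      qed
      show "AE x in lborel. norm (F x * fourier \<psi> x * complex_of_real (w (1/real (Suc n)) x)) \<le> norm (F x * fourier \<psi> x)" for n
      proof (intro AE_I2)
        fix x
        have "\<bar>w (1/real (Suc n)) x\<bar> \<le> 1" using w_le1[of "1/real (Suc n)" x] w_pos[of "1/real (Suc n)" x] by simp
        then show "norm (F x * fourier \<psi> x * complex_of_real (w (1/real (Suc n)) x)) \<le> norm (F x * fourier \<psi> x)"
          unfolding norm_mult norm_of_real by (intro mult_left_le) simp_all
      qed
    qed
    have lim2: "(\<lambda>n. T (1/real (Suc n))) \<longlonglongrightarrow> 0"
    proof (rule Lim_null_comparison)
      show "\<forall>\<^sub>F n in sequentially. norm (T (1/real (Suc n))) \<le> P * C (1/real (Suc n))"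
        using Tb by (intro always_eventually allI) simp
      show "(\<lambda>n. P * C (1/real (Suc n))) \<longlonglongrightarrow> 0"
        unfolding C_def using tendsto_mult[OF tendsto_const C_lim[OF b], of P] by simp
    qed
    show ?thesis using LIMSEQ_unique[OF lim1 lim2] unfolding F_def .
  qed
qed


definition q :: "real \<Rightarrow> real" where "q u = inverse (1 + u^2)"

lemma q_int: "integrable lborel q" and q_integral: "(\<integral>u. q u \<partial>lborel) = pi"
proof -
  have "set_integrable lborel (einterval (-\<infinity>) \<infinity>) (\<lambda>x. inverse (1 + x^2))"
    by (rule integrable_inverse_1_plus_square)
  then show "integrable lborel q" unfolding q_def set_integrable_def by simp
  have "(LBINT x=-\<infinity>..\<infinity>. inverse (1 + x^2)) = pi" by (rule LBINT_inverse_1_plus_square)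
  then show "(\<integral>u. q u \<partial>lborel) = pi"
    unfolding q_def interval_lebesgue_integral_def set_lebesgue_integral_def by simp
qed

lemma q_pos: "q u > 0" unfolding q_def by (simp add: add_pos_nonneg)
lemma q_meas[measurable]: "q \<in> borel_measurable borel" unfolding q_def by measurable

lemma norm_f0_sq': "norm (f0 u) ^ 2 = q u" unfolding norm_f0_sq q_def by (simp add: inverse_eq_divide)

lemma affine_q:
  assumes m: "m > 0" and that: "integrable lborel (\<lambda>u. h u * q u)"
  shows "integrable lborel (\<lambda>y. h (m*(y-y0)) * q (m*(y-y0)))"
    and "(\<integral>y. h (m*(y-y0)) * q (m*(y-y0)) \<partial>lborel) = (1/m) * (\<integral>u. h u * q u \<partial>lborel)"
proof -
  have "integrable lborel (\<lambda>x. h (-(m*y0) + m * x) * q (-(m*y0) + m * x))"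
    using lborel_integrable_real_affine[OF that, of m "-(m*y0)"] m by simp
  then show "integrable lborel (\<lambda>y. h (m*(y-y0)) * q (m*(y-y0)))" by (simp add: algebra_simps)
  have "(\<integral>y. h (m*(y-y0)) * q (m*(y-y0)) \<partial>lborel) = \<bar>1/m\<bar> *\<^sub>R (\<integral>x. h (m*((y0 + 1/m*x)-y0)) * q (m*((y0 + 1/m*x)-y0)) \<partial>lborel)"
    by (rule lborel_integral_real_affine) (use m in simp)
  also have "\<dots> = (1/m) * (\<integral>u. h u * q u \<partial>lborel)" using m by (simp add: algebra_simps)
  finally show "(\<integral>y. h (m*(y-y0)) * q (m*(y-y0)) \<partial>lborel) = (1/m) * (\<integral>u. h u * q u \<partial>lborel)" .
qed

lemma mem_H2:
  assumes m: "m > 0"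
  shows "(\<lambda>x. c * f0 (m*(x-y0))) \<in> H2"
proof -
  have "integrable lborel (\<lambda>y. (\<lambda>_. (cmod c)^2) (m*(y-y0)) * q (m*(y-y0)))"
    by (rule affine_q(1)[OF m]) (use q_int in simp)
  then have "integrable lborel (\<lambda>x. (cmod (c * f0 (m*(x-y0))))^2)"
    by (simp add: norm_mult power_mult_distrib norm_f0_sq')
  moreover have "(\<lambda>x. c * f0 (m*(x-y0))) \<in> borel_measurable lborel" by measurable
  moreover have "(\<integral>x. c * f0 (m*(x-y0)) * fourier \<psi> x \<partial>lborel) = 0" if "test_neg \<psi>" for \<psi>
    using F_orth[OF m that, of y0] by (simp add: mult.assoc)
  ultimately show ?thesis unfolding H2_def L2_def by auto
qed



lemma chi_norm[simp]: "norm (chi a y) = 1"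
  unfolding chi_def by simp

lemma chi_meas[measurable]: "chi a \<in> borel_measurable borel"
  unfolding chi_def by measurable

lemma L2norm_sq: "L2norm f ^ 2 = (\<integral>x. (cmod (f x))^2 \<partial>lborel)"
  unfolding L2norm_def by (simp add: integral_nonneg_AE)

lemma norm_vec_sq: "(norm (v :: complex ^ 'n))^2 = (\<Sum>j\<in>UNIV. (norm (v $ j))^2)"
  unfolding norm_vec_def L2_set_def by (simp add: sum_nonneg)

lemma subset_dir:
  fixes \<alpha> :: "real ^ 'n"
  assumes l: "l \<in> joint_ap_spectrum H2 (\<lambda>j. W_chi (\<alpha> $ j))"
  shows "l \<in> closure ((\<lambda>y. \<chi> j. chi (\<alpha> $ j) y) ` UNIV)"
proof (rule ccontr)
  assume nl: "l \<notin> closure ((\<lambda>y. \<chi> j. chi (\<alpha> $ j) y) ` UNIV)"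
  then obtain e where e: "e > 0" and fe: "\<And>y. dist (\<chi> j. chi (\<alpha> $ j) y) l \<ge> e"
    unfolding closure_approachable by (auto simp: not_less)
  from l obtain x where xH: "\<And>m. x m \<in> H2" and xn: "\<And>m. L2norm (x m) = 1"
    and lim: "\<And>j. (\<lambda>m. L2norm (\<lambda>y. W_chi (\<alpha> $ j) (x m) y - l $ j * x m y)) \<longlonglongrightarrow> 0"
    unfolding joint_ap_spectrum_def by blast
  have xm[measurable]: "x m \<in> borel_measurable lborel" for m using xH[of m] unfolding H2_def L2_def by auto
  have xi: "integrable lborel (\<lambda>y. (cmod (x m y))^2)" for m using xH[of m] unfolding H2_def L2_def by auto
  have x1: "(\<integral>y. (cmod (x m y))^2 \<partial>lborel) = 1" for m
    using L2norm_sq[of "x m"] xn[of m] by simp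
  define D where "D j y = (cmod (chi (\<alpha> $ j) y - l $ j))^2" for j y
  have Dm[measurable]: "D j \<in> borel_measurable lborel" for j unfolding D_def by measurable
  have Db: "D j y \<le> (1 + cmod (l $ j))^2" for j y
  proof -
    have "cmod (chi (\<alpha> $ j) y - l $ j) \<le> 1 + cmod (l $ j)"
      using norm_triangle_ineq4[of "chi (\<alpha> $ j) y" "l $ j"] by simp
    then show ?thesis unfolding D_def by (intro power_mono) auto
  qed
  have Di: "integrable lborel (\<lambda>y. D j y * (cmod (x m y))^2)" for j m
  proof (rule Bochner_Integration.integrable_bound[OF integrable_mult_right[OF xi[of m], of "(1 + cmod (l $ j))^2"]])
    show "(\<lambda>y. D j y * (cmod (x m y))^2) \<in> borel_measurable lborel" by measurable
    show "AE y in lborel. norm (D j y * (cmod (x m y))^2) \<le> norm ((1 + cmod (l $ j))^2 * (cmod (x m y))^2)"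
      using Db by (intro AE_I2) (simp add: D_def mult_right_mono)
  qed
  have eq: "L2norm (\<lambda>y. W_chi (\<alpha> $ j) (x m) y - l $ j * x m y) ^ 2 = (\<integral>y. D j y * (cmod (x m y))^2 \<partial>lborel)" for j m
    unfolding L2norm_sq W_chi_def D_def
    by (rule Bochner_Integration.integral_cong) (simp_all add: left_diff_distrib[symmetric] norm_mult power_mult_distrib)
  have sumlim: "(\<lambda>m. \<Sum>j\<in>UNIV. L2norm (\<lambda>y. W_chi (\<alpha> $ j) (x m) y - l $ j * x m y) ^ 2) \<longlonglongrightarrow> 0"
  proof -
    have "(\<lambda>m. \<Sum>j\<in>UNIV. L2norm (\<lambda>y. W_chi (\<alpha> $ j) (x m) y - l $ j * x m y) ^ 2) \<longlonglongrightarrow> (\<Sum>j\<in>(UNIV::'n set). (0::real)^2)"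
      by (intro tendsto_sum tendsto_power lim)
    then show ?thesis by simp
  qed
  have ge: "e^2 \<le> (\<Sum>j\<in>UNIV. L2norm (\<lambda>y. W_chi (\<alpha> $ j) (x m) y - l $ j * x m y) ^ 2)" for m
  proof -
    have "(\<Sum>j\<in>UNIV. L2norm (\<lambda>y. W_chi (\<alpha> $ j) (x m) y - l $ j * x m y) ^ 2)
        = (\<integral>y. (\<Sum>j\<in>UNIV. D j y) * (cmod (x m y))^2 \<partial>lborel)"
      unfolding eq sum_distrib_right using Di by (subst Bochner_Integration.integral_sum) auto
    moreover have "(\<integral>y. e^2 * (cmod (x m y))^2 \<partial>lborel) \<le> (\<integral>y. (\<Sum>j\<in>UNIV. D j y) * (cmod (x m y))^2 \<partial>lborel)"
    proof (rule integral_mono)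
      show "integrable lborel (\<lambda>y. e^2 * (cmod (x m y))^2)" using xi by simp
      show "integrable lborel (\<lambda>y. (\<Sum>j\<in>UNIV. D j y) * (cmod (x m y))^2)"
        unfolding sum_distrib_right using Di by auto
      fix y
      have "e^2 \<le> (dist (\<chi> j. chi (\<alpha> $ j) y) l)^2" using fe[of y] e by (intro power_mono) auto
      also have "\<dots> = (\<Sum>j\<in>UNIV. D j y)"
        unfolding dist_norm norm_vec_sq D_def by simp
      finally show "e^2 * (cmod (x m y))^2 \<le> (\<Sum>j\<in>UNIV. D j y) * (cmod (x m y))^2"
        by (rule mult_right_mono) simp
    qed
    ultimately show ?thesis using x1[of m] by simp
  qed
  have "e^2 \<le> 0"
    using ge sumlim by (intro LIMSEQ_le_const[OF sumlim]) auto
  then show False using e by simp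
qed


lemma chi_add: "chi a (u + v) = chi a u * chi a v"
  unfolding chi_def by (simp add: distrib_left exp_add[symmetric] algebra_simps)

lemma chi_shift: "cmod (chi a (y0 + v) - chi a y0) = cmod (chi a v - 1)"
proof -
  have "chi a (y0 + v) - chi a y0 = chi a y0 * (chi a v - 1)" by (simp add: chi_add algebra_simps)
  then show ?thesis by (simp add: norm_mult)
qed

lemma chi_zero: "chi a 0 = 1" unfolding chi_def by simp

lemma chi_isCont: "isCont (chi a) x" unfolding chi_def by (intro continuous_intros)

lemma sq_tri: "(cmod (z1 - z3))^2 \<le> 2 * (cmod (z1 - z2))^2 + 2 * (cmod (z2 - z3))^2"
proof -
  have "cmod (z1 - z3) \<le> cmod (z1 - z2) + cmod (z2 - z3)" using norm_triangle_ineq[of "z1-z2" "z2-z3"] by simp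
  then have "(cmod (z1 - z3))^2 \<le> (cmod (z1 - z2) + cmod (z2 - z3))^2" by (intro power_mono) auto
  also have "\<dots> \<le> 2 * (cmod (z1 - z2))^2 + 2 * (cmod (z2 - z3))^2"
    by (smt (verit) sum_squares_bound power2_sum)
  finally show ?thesis .
qed

lemma limR:
  "(\<lambda>n. \<integral>u. (cmod (chi a (u / real (Suc n)) - 1))^2 * q u \<partial>lborel) \<longlonglongrightarrow> 0"
proof -
  have a1: "(\<lambda>u. 0::real) \<in> borel_measurable lborel" by simp
  have a2: "(\<lambda>u. (cmod (chi a (u / real (Suc n)) - 1))^2 * q u) \<in> borel_measurable lborel" for n
    by measurable
  have a3: "integrable lborel (\<lambda>u. 4 * q u)" using q_int by simp
  have a4: "AE u in lborel. (\<lambda>n. (cmod (chi a (u / real (Suc n)) - 1))^2 * q u) \<longlonglongrightarrow> 0"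
  proof (rule AE_I2)
    fix u
    have "(\<lambda>n. u / real (Suc n)) \<longlonglongrightarrow> 0"
      using tendsto_mult[OF tendsto_const[of u] LIMSEQ_inverse_real_of_nat] by (simp add: divide_inverse)
    then have "(\<lambda>n. chi a (u / real (Suc n))) \<longlonglongrightarrow> chi a 0"
      by (rule isCont_tendsto_compose[OF chi_isCont])
    then have "(\<lambda>n. (cmod (chi a (u / real (Suc n)) - 1))^2 * q u) \<longlonglongrightarrow> (cmod (chi a 0 - 1))^2 * q u"
      by (intro tendsto_intros)
    then show "(\<lambda>n. (cmod (chi a (u / real (Suc n)) - 1))^2 * q u) \<longlonglongrightarrow> 0" by (simp add: chi_zero)
  qed
  have a5: "AE u in lborel. norm ((cmod (chi a (u / real (Suc n)) - 1))^2 * q u) \<le> 4 * q u" for n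
  proof (rule AE_I2)
    fix u
    have "cmod (chi a (u / real (Suc n)) - 1) \<le> 2"
      using norm_triangle_ineq4[of "chi a (u / real (Suc n))" 1] by simp
    then have "(cmod (chi a (u / real (Suc n)) - 1))^2 \<le> 2^2" by (intro power_mono) auto
    then show "norm ((cmod (chi a (u / real (Suc n)) - 1))^2 * q u) \<le> 4 * q u"
      using q_pos[of u] by (simp add: abs_mult mult_right_mono)
  qed
  show ?thesis
    using Bochner_Integration.integral_dominated_convergence[OF a1 a2 a3 a4 a5] by simp
qed


lemma supset_dir:
  fixes \<alpha> :: "real ^ 'n"
  assumes l: "l \<in> closure ((\<lambda>y. \<chi> j. chi (\<alpha> $ j) y) ` UNIV)"
  shows "l \<in> joint_ap_spectrum H2 (\<lambda>j. W_chi (\<alpha> $ j))"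
proof -
  have "\<forall>n. \<exists>y. dist (\<chi> j. chi (\<alpha> $ j) y) l < 1 / real (Suc n)"
    using l unfolding closure_approachable by (metis (no_types, lifting) dist_commute imageE of_nat_0_less_iff zero_less_Suc divide_pos_pos zero_less_one)
  then obtain yy where yy: "\<And>n. dist (\<chi> j. chi (\<alpha> $ j) (yy n)) l < 1 / real (Suc n)" by metis
  define mm where "mm n = real (Suc n)" for n
  have mm0: "mm n > 0" for n unfolding mm_def by simp
  define x where "x n y = complex_of_real (sqrt (mm n / pi)) * f0 (mm n * (y - yy n))" for n y
  have xsq: "(cmod (x n y))^2 = (mm n / pi) * q (mm n * (y - yy n))" for n y
    unfolding x_def norm_mult power_mult_distrib norm_f0_sq' norm_of_real using mm0[of n]
    by (simp add: real_sqrt_pow2 [symmetric])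
  have xm[measurable]: "x n \<in> borel_measurable lborel" for n unfolding x_def by measurable
  have xH: "x n \<in> H2" for n unfolding x_def by (rule mem_H2[OF mm0])
  have xint: "integrable lborel (\<lambda>y. (\<lambda>_. mm n / pi) (mm n * (y - yy n)) * q (mm n * (y - yy n)))" for n
    by (rule affine_q(1)[OF mm0]) (use q_int in simp)
  have xi: "integrable lborel (\<lambda>y. (cmod (x n y))^2)" for n
    unfolding xsq using xint[of n] by simp
  have x1: "(\<integral>y. (cmod (x n y))^2 \<partial>lborel) = 1" for n
  proof -
    have "(\<integral>y. (\<lambda>_. mm n / pi) (mm n * (y - yy n)) * q (mm n * (y - yy n)) \<partial>lborel) = (1 / mm n) * (\<integral>u. (mm n / pi) * q u \<partial>lborel)"
      by (rule affine_q(2)[OF mm0]) (use q_int in simp)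
    then show ?thesis unfolding xsq using mm0[of n] by (simp add: q_integral)
  qed
  have xn: "L2norm (x n) = 1" for n unfolding L2norm_def x1 by simp
  have conv: "(\<lambda>n. L2norm (\<lambda>y. W_chi (\<alpha> $ j) (x n) y - l $ j * x n y)) \<longlonglongrightarrow> 0" for j
  proof -
    define a where "a = \<alpha> $ j"
    define R where "R n = (\<integral>u. (cmod (chi a (u / real (Suc n)) - 1))^2 * q u \<partial>lborel)" for n
    have dl: "cmod (chi a (yy n) - l $ j) \<le> 1 / real (Suc n)" for n
    proof -
      have "cmod (chi a (yy n) - l $ j) = norm (((\<chi> j. chi (\<alpha> $ j) (yy n)) - l) $ j)" by (simp add: a_def)
      also have "\<dots> \<le> norm ((\<chi> j. chi (\<alpha> $ j) (yy n)) - l)" by (rule Finite_Cartesian_Product.norm_nth_le)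
      also have "\<dots> < 1 / real (Suc n)" using yy[of n] by (simp add: dist_norm)
      finally show ?thesis by simp
    qed
    define B where "B n y = (cmod (chi a y - chi a (yy n)))^2 * (cmod (x n y))^2" for n y
    have Bi: "integrable lborel (B n)" for n
    proof (rule Bochner_Integration.integrable_bound[OF integrable_mult_right[OF xi[of n], of 4]])
      show "B n \<in> borel_measurable lborel" unfolding B_def by measurable
      show "AE y in lborel. norm (B n y) \<le> norm (4 * (cmod (x n y))^2)"
      proof (rule AE_I2)
        fix y
        have "cmod (chi a y - chi a (yy n)) \<le> 2" using norm_triangle_ineq4[of "chi a y" "chi a (yy n)"] by simp
        then have "(cmod (chi a y - chi a (yy n)))^2 \<le> 2^2" by (intro power_mono) auto
        then show "norm (B n y) \<le> norm (4 * (cmod (x n y))^2)" unfolding B_def by (simp add: mult_right_mono)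
      qed
    qed
    have BR: "(\<integral>y. B n y \<partial>lborel) = R n / pi" for n
    proof -
      define h where "h u = (cmod (chi a (yy n + u / mm n) - chi a (yy n)))^2 * (mm n / pi)" for u
      have hq: "integrable lborel (\<lambda>u. h u * q u)"
      proof (rule Bochner_Integration.integrable_bound[OF integrable_mult_right[OF q_int, of "4 * (mm n / pi)"]])
        show "(\<lambda>u. h u * q u) \<in> borel_measurable lborel" unfolding h_def by measurable
        show "AE u in lborel. norm (h u * q u) \<le> norm (4 * (mm n / pi) * q u)"
        proof (rule AE_I2)
          fix u
          have "cmod (chi a (yy n + u / mm n) - chi a (yy n)) \<le> 2"
            using norm_triangle_ineq4[of "chi a (yy n + u / mm n)" "chi a (yy n)"] by simp
          then have "(cmod (chi a (yy n + u / mm n) - chi a (yy n)))^2 \<le> 2^2" by (intro power_mono) auto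
          then show "norm (h u * q u) \<le> norm (4 * (mm n / pi) * q u)"
            unfolding h_def using q_pos[of u] mm0[of n]
            by (simp add: abs_mult divide_right_mono mult_right_mono)
        qed
      qed
      have "B n = (\<lambda>y. h (mm n * (y - yy n)) * q (mm n * (y - yy n)))"
      proof
        fix y
        have "yy n + mm n * (y - yy n) / mm n = y" using mm0[of n] by simp
        then show "B n y = h (mm n * (y - yy n)) * q (mm n * (y - yy n))"
          unfolding B_def h_def xsq by simp
      qed
      then have "(\<integral>y. B n y \<partial>lborel) = (1 / mm n) * (\<integral>u. h u * q u \<partial>lborel)"
        using affine_q(2)[OF mm0 hq] by simp
      also have "(\<lambda>u. h u * q u) = (\<lambda>u. (mm n / pi) * ((cmod (chi a (u / real (Suc n)) - 1))^2 * q u))"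
        unfolding h_def chi_shift mm_def by auto
      finally show ?thesis unfolding R_def using mm0[of n] by (simp add: mm_def)
    qed
    have bound: "L2norm (\<lambda>y. W_chi (\<alpha> $ j) (x n) y - l $ j * x n y) \<le> sqrt (2 * (R n / pi) + 2 * (1 / real (Suc n))^2)" for n
    proof -
      have "L2norm (\<lambda>y. W_chi (\<alpha> $ j) (x n) y - l $ j * x n y) ^ 2 = (\<integral>y. (cmod (chi a y - l $ j))^2 * (cmod (x n y))^2 \<partial>lborel)"
        unfolding L2norm_sq W_chi_def a_def
        by (rule Bochner_Integration.integral_cong) (simp_all add: left_diff_distrib[symmetric] norm_mult power_mult_distrib)
      also have "\<dots> \<le> (\<integral>y. 2 * B n y + 2 * (1 / real (Suc n))^2 * (cmod (x n y))^2 \<partial>lborel)"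
      proof (rule integral_mono)
        show "integrable lborel (\<lambda>y. 2 * B n y + 2 * (1 / real (Suc n))^2 * (cmod (x n y))^2)"
          using Bi xi by auto
        show "integrable lborel (\<lambda>y. (cmod (chi a y - l $ j))^2 * (cmod (x n y))^2)"
        proof (rule Bochner_Integration.integrable_bound[OF integrable_mult_right[OF xi[of n], of "(1 + cmod (l $ j))^2"]])
          show "(\<lambda>y. (cmod (chi a y - l $ j))^2 * (cmod (x n y))^2) \<in> borel_measurable lborel" by measurable
          show "AE y in lborel. norm ((cmod (chi a y - l $ j))^2 * (cmod (x n y))^2) \<le> norm ((1 + cmod (l $ j))^2 * (cmod (x n y))^2)"
          proof (rule AE_I2)
            fix y
            have "cmod (chi a y - l $ j) \<le> 1 + cmod (l $ j)" using norm_triangle_ineq4[of "chi a y" "l $ j"] by simp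
            then have "(cmod (chi a y - l $ j))^2 \<le> (1 + cmod (l $ j))^2" by (intro power_mono) auto
            then show "norm ((cmod (chi a y - l $ j))^2 * (cmod (x n y))^2) \<le> norm ((1 + cmod (l $ j))^2 * (cmod (x n y))^2)"
              by (simp add: mult_right_mono)
          qed
        qed
        fix y
        have "(cmod (chi a y - l $ j))^2 \<le> 2 * (cmod (chi a y - chi a (yy n)))^2 + 2 * (cmod (chi a (yy n) - l $ j))^2"
          by (rule sq_tri)
        also have "\<dots> \<le> 2 * (cmod (chi a y - chi a (yy n)))^2 + 2 * (1 / real (Suc n))^2"
          using dl[of n] by (simp add: power_mono)
        finally show "(cmod (chi a y - l $ j))^2 * (cmod (x n y))^2 \<le> 2 * B n y + 2 * (1 / real (Suc n))^2 * (cmod (x n y))^2"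
          unfolding B_def by (simp add: mult_right_mono distrib_right[symmetric] mult.assoc[symmetric] del: of_nat_Suc)
      qed
      also have "\<dots> = 2 * (R n / pi) + 2 * (1 / real (Suc n))^2"
        using Bi xi x1 BR by simp
      finally show ?thesis by (rule real_le_rsqrt)
    qed
    have "(\<lambda>n. sqrt (2 * (R n / pi) + 2 * (1 / real (Suc n))^2)) \<longlonglongrightarrow> sqrt (2 * (0 / pi) + 2 * 0^2)"
      unfolding R_def
      by (intro tendsto_intros limR LIMSEQ_inverse_real_of_nat[unfolded inverse_eq_divide]) simp
    then have "(\<lambda>n. sqrt (2 * (R n / pi) + 2 * (1 / real (Suc n))^2)) \<longlonglongrightarrow> 0" by simp
    then show ?thesis
    proof (rule Lim_null_comparison[rotated])
      have "L2norm f \<ge> 0" for f unfolding L2norm_def by simp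
      then show "\<forall>\<^sub>F n in sequentially. norm (L2norm (\<lambda>y. W_chi (\<alpha> $ j) (x n) y - l $ j * x n y)) \<le> sqrt (2 * (R n / pi) + 2 * (1 / real (Suc n))^2)"
        using bound by (intro always_eventually allI) simp
    qed
  qed
  show ?thesis unfolding joint_ap_spectrum_def using xH xn conv by blast
qed


theorem mainTheorem15:
  fixes \<alpha> :: "real ^ 'n"
  assumes "\<forall>j. \<alpha> $ j > 0"
    and "inj (\<lambda>j. \<alpha> $ j)"
  shows "joint_ap_spectrum H2 (\<lambda>j. W_chi (\<alpha> $ j))
         = closure ((\<lambda>y. \<chi> j. chi (\<alpha> $ j) y) ` UNIV)"
  using subset_dir[of _ \<alpha>] supset_dir[of _ \<alpha>] by blast

end
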